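(* Let $k\ge 2$ be an integer and let $H=(V,\mathcal E)$ be a finite hypergraph that is hereditarily $k$-colorable. Set $\lambda := \frac{k}{k-1}$. Let $\mathcal L=\{L_v\}_{v\in V}$ be a family of finite sets of positive integers such that $\sum_{v\in V}\lambda^{-|L_v|} < 1$. Then $H$ admits a unique-maximum coloring from $\mathcal L$, i.e., there is a unique-maximum coloring $C$ of $H$ with $C(v)\in L_v$ for every $v\in V$.
   Context: A hypergraph $H=(V,\mathcal E)$ has finite vertex set $V$ and a family $\mathcal E$ of nonempty subsets of $V$ (hyperedges). A coloring $C\colon V\to\mathbb Z_{>0}$ is proper if every hyperedge with at least two vertices is non-monochromatic. It is a unique-maximum coloring if for every $S\in\mathcal E$, the maximum color $\max_{v\in S}C(v)$ is attained by exactly one vertex of $S$. For $V'\subseteq V$, the induced sub-hypergraph is $H[V']=(V',\{S\cap V' : S\in\mathcal E\})$. $H$ is hereditarily $k$-colorable if for every $V'\subseteq V$, $H[V']$ admits a proper coloring with at most $k$ colors. Given a family $\mathcal L=\{L_v\}_{v\in V}$ of sets of positive integers, $H$ admits a (unique-maximum) coloring from $\mathcal L$ if there is such a coloring with $C(v)\in L_v$ for all $v$. *)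

theory Defs
  imports Complex_Main
begin

definition hypergraph :: "'a set \<Rightarrow> 'a set set \<Rightarrow> bool" where
  "hypergraph V E \<longleftrightarrow> finite V \<and> (\<forall>S\<in>E. S \<noteq> {} \<and> S \<subseteq> V)"

definition induced_edges :: "'a set set \<Rightarrow> 'a set \<Rightarrow> 'a set set" where
  "induced_edges E V' = {S \<inter> V' | S. S \<in> E}"

definition proper_coloring :: "'a set \<Rightarrow> 'a set set \<Rightarrow> ('a \<Rightarrow> nat) \<Rightarrow> bool" where
  "proper_coloring V E C \<longleftrightarrow> (\<forall>v\<in>V. C v > 0) \<and>
     (\<forall>S\<in>E. card S \<ge> 2 \<longrightarrow> (\<exists>u\<in>S. \<exists>w\<in>S. C u \<noteq> C w))"

definition k_colorable :: "nat \<Rightarrow> 'a set \<Rightarrow> 'a set set \<Rightarrow> bool" where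
  "k_colorable k V E \<longleftrightarrow> (\<exists>C. proper_coloring V E C \<and> card (C ` V) \<le> k)"

definition hereditarily_k_colorable :: "nat \<Rightarrow> 'a set \<Rightarrow> 'a set set \<Rightarrow> bool" where
  "hereditarily_k_colorable k V E \<longleftrightarrow>
     (\<forall>V'\<subseteq>V. k_colorable k V' (induced_edges E V'))"

definition unique_max_coloring :: "'a set \<Rightarrow> 'a set set \<Rightarrow> ('a \<Rightarrow> nat) \<Rightarrow> bool" where
  "unique_max_coloring V E C \<longleftrightarrow> (\<forall>v\<in>V. C v > 0) \<and>
     (\<forall>S\<in>E. \<exists>!v. v \<in> S \<and> C v = Max (C ` S))"

end

theory Submission
  imports Defs
begin

lemma main_lemma:
  fixes k :: nat and E :: "'a set set" and V :: "'a set" and L :: "'a \<Rightarrow> nat set"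
  assumes k2: "k \<ge> 2"
  shows "finite V \<Longrightarrow> (\<forall>V'\<subseteq>V. k_colorable k V' (induced_edges E V')) \<Longrightarrow> (\<forall>v\<in>V. finite (L v))
    \<Longrightarrow> (\<Sum>v\<in>V. (real k / (real k - 1)) powr (- real (card (L v)))) < 1
    \<Longrightarrow> \<exists>C. (\<forall>v\<in>V. C v \<in> L v) \<and> (\<forall>S\<in>E. S \<inter> V \<noteq> {} \<longrightarrow> (\<exists>!v. v \<in> S \<inter> V \<and> C v = Max (C ` (S \<inter> V))))"
proof (induction "card V" arbitrary: V L rule: less_induct)
  case less
  define lam where "lam = real k / (real k - 1)"
  have k1: "real k - 1 > 0" using k2 by simp
  have lam1: "lam > 1" using k1 by (simp add: lam_def field_simps)
  show ?case
  proof (cases "V = {}")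
    case True then show ?thesis by auto
  next
    case False
    define w where "w = (\<lambda>v. lam powr (- real (card (L v))))"
    have wpos: "\<And>v. w v > 0" using lam1 by (simp add: w_def)
    have sumlt: "sum w V < 1" using less.prems(4) by (simp add: w_def lam_def)
    have ne: "\<forall>v\<in>V. L v \<noteq> {}"
    proof
      fix v assume v: "v \<in> V"
      show "L v \<noteq> {}"
      proof
        assume "L v = {}"
        then have "w v = 1" using lam1 by (simp add: w_def)
        moreover have "w v \<le> sum w V" using v less.prems(1) wpos
          by (intro member_le_sum) (auto simp: less_imp_le)
        ultimately show False using sumlt by simp
      qed
    qed
    define A where "A = (\<Union>v\<in>V. L v)"
    have Afin: "finite A" "A \<noteq> {}" using less.prems ne False by (auto simp: A_def)
    define c where "c = Min A"
    have cle: "\<And>v x. v \<in> V \<Longrightarrow> x \<in> L v \<Longrightarrow> c \<le> x" using Afin unfolding c_def A_def by (intro Min_le) auto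
    obtain v0 where v0: "v0 \<in> V" "c \<in> L v0" using Min_in[OF Afin] by (auto simp: c_def A_def)
    define U where "U = {v\<in>V. c \<in> L v}"
    have UV: "U \<subseteq> V" by (auto simp: U_def)
    have Une: "U \<noteq> {}" using v0 by (auto simp: U_def)
    obtain D where D: "proper_coloring U (induced_edges E U) D" "card (D ` U) \<le> k"
      using less.prems(2) UV by (auto simp: k_colorable_def)
    define cls where "cls = (\<lambda>j. {u\<in>U. D u = j})"
    define f where "f = (\<lambda>j. sum w (cls j))"
    have Ufin: "finite U" using UV less.prems(1) finite_subset by blast
    have sumU: "sum w U = (\<Sum>j\<in>D ` U. f j)"
      unfolding f_def cls_def using Ufin by (rule sum.image_gen)
    have DUfin: "finite (D ` U)" "D ` U \<noteq> {}" using Ufin Une by auto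
    have "Max (f ` D ` U) \<in> f ` D ` U" using DUfin by (intro Max_in) auto
    then obtain j where j: "j \<in> D ` U" "f j = Max (f ` D ` U)" by (metis imageE)
    have jmax: "\<forall>i\<in>D ` U. f i \<le> f j" using j DUfin by auto
    have fj0: "f j \<ge> 0" unfolding f_def using wpos by (simp add: less_imp_le sum_nonneg)
    have "sum w U \<le> real (card (D ` U)) * f j"
      unfolding sumU by (rule sum_bounded_above) (use jmax in auto)
    also have "\<dots> \<le> real k * f j" using D(2) fj0 by (simp add: mult_right_mono)
    finally have W: "sum w U \<le> real k * f j" .
    define X where "X = cls j"
    have XU: "X \<subseteq> U" by (auto simp: X_def cls_def)
    have Xne: "X \<noteq> {}" using j(1) by (auto simp: X_def cls_def)
    have Vfin: "finite V" using less.prems(1) .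
    have Xfin: "finite X" using XU Ufin finite_subset by blast
    define L' where "L' = (\<lambda>v. if v \<in> U then L v - {c} else L v)"
    have card_lt: "card (V - X) < card V"
      using Xne XU UV Vfin by (intro psubset_card_mono) auto
    define w' where "w' = (\<lambda>v. lam powr (- real (card (L' v))))"
    have w'U: "w' v = lam * w v" if "v \<in> U" for v
    proof -
      have fin: "finite (L v)" "c \<in> L v" using that less.prems(3) by (auto simp: U_def)
      then have cd: "card (L' v) = card (L v) - 1" "card (L v) \<ge> 1" using that
        by (auto simp: L'_def card_gt_0_iff Suc_le_eq)
      then have "real (card (L' v)) = real (card (L v)) - 1" by simp
      then have "- real (card (L' v)) = 1 + (- real (card (L v)))" by simp
      then have "w' v = lam powr (1 + (- real (card (L v))))" by (simp add: w'_def)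
      also have "\<dots> = lam powr 1 * lam powr (- real (card (L v)))" by (rule powr_add)
      finally show ?thesis using lam1 by (simp add: w_def)
    qed
    have w'nU: "w' v = w v" if "v \<notin> U" for v using that by (simp add: w'_def w_def L'_def)
    have split1: "sum w' (V - X) = sum w (V - U) + lam * sum w (U - X)"
    proof -
      have "V - X = (V - U) \<union> (U - X)" using XU UV by auto
      then have "sum w' (V - X) = sum w' (V - U) + sum w' (U - X)"
        using Vfin Ufin by (metis Diff_disjoint Int_Diff finite_Diff inf.commute sum.union_disjoint)
      also have "sum w' (V - U) = sum w (V - U)" by (intro sum.cong) (auto simp: w'nU)
      also have "sum w' (U - X) = lam * sum w (U - X)"
        by (simp add: sum_distrib_left w'U)
      finally show ?thesis .
    qed
    have split2: "sum w V = sum w (V - U) + sum w (U - X) + sum w X"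
    proof -
      have "sum w V = sum w (V - U) + sum w U" using UV Vfin
        by (metis add.commute sum.subset_diff)
      moreover have "sum w U = sum w (U - X) + sum w X" using XU Ufin
        by (metis add.commute sum.subset_diff)
      ultimately show ?thesis by simp
    qed
    have sU: "sum w U = sum w (U - X) + sum w X" using XU Ufin
        by (metis add.commute sum.subset_diff)
    have fX: "f j = sum w X" by (simp add: f_def X_def)
    have t1: "sum w (U - X) \<le> (real k - 1) * sum w X" using W sU fX by (simp add: algebra_simps)
    have lamm1: "lam - 1 = 1 / (real k - 1)" using k1 by (simp add: lam_def field_simps)
    have "(lam - 1) * sum w (U - X) \<le> sum w X"
      using t1 k1 by (simp add: lamm1 divide_le_eq mult.commute)
    then have "sum w' (V - X) \<le> sum w V" using split1 split2 by (simp add: algebra_simps)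
    then have sum': "(\<Sum>v\<in>V - X. (real k / (real k - 1)) powr (- real (card (L' v)))) < 1"
      using sumlt by (simp add: w'_def lam_def)
    have her: "\<forall>V'\<subseteq>V - X. k_colorable k V' (induced_edges E V')" using less.prems(2) by auto
    have finL': "\<forall>v\<in>V - X. finite (L' v)" using less.prems(3) by (simp add: L'_def)
    obtain C' where C': "\<forall>v\<in>V - X. C' v \<in> L' v"
      "\<forall>S\<in>E. S \<inter> (V - X) \<noteq> {} \<longrightarrow> (\<exists>!v. v \<in> S \<inter> (V - X) \<and> C' v = Max (C' ` (S \<inter> (V - X))))"
      using less.hyps[OF card_lt _ her finL' sum'] Vfin by blast
    define C where "C = (\<lambda>v. if v \<in> X then c else C' v)"
    have inL: "\<forall>v\<in>V. C v \<in> L v"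
      using C'(1) XU by (auto simp: C_def U_def L'_def split: if_splits)
    have gt: "C' v > c" if "v \<in> V - X" for v
    proof -
      have "C' v \<in> L' v" using C'(1) that by auto
      then have "C' v \<in> L v" "C' v \<noteq> c" using that by (auto simp: L'_def U_def split: if_splits)
      then show ?thesis using cle[of v "C' v"] that by auto
    qed
    have um: "\<forall>S\<in>E. S \<inter> V \<noteq> {} \<longrightarrow> (\<exists>!v. v \<in> S \<inter> V \<and> C v = Max (C ` (S \<inter> V)))"
    proof (intro ballI impI)
      fix S assume S: "S \<in> E" "S \<inter> V \<noteq> {}"
      have SVfin: "finite (S \<inter> V)" using Vfin by simp
      show "\<exists>!v. v \<in> S \<inter> V \<and> C v = Max (C ` (S \<inter> V))"
      proof (cases "S \<inter> (V - X) = {}")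
        case False
        then obtain v1 where v1: "v1 \<in> S \<inter> (V - X)" "C' v1 = Max (C' ` (S \<inter> (V - X)))"
          "\<And>v. v \<in> S \<inter> (V - X) \<Longrightarrow> C' v = Max (C' ` (S \<inter> (V - X))) \<Longrightarrow> v = v1"
          using C'(2) S(1) by metis
        have gev: "C' v \<le> C' v1" if "v \<in> S \<inter> (V - X)" for v
          using that v1(2) Vfin by simp
        have Cv1: "C v1 = C' v1" using v1(1) by (simp add: C_def)
        have cv1: "c < C' v1" using gt v1(1) by auto
        have M: "Max (C ` (S \<inter> V)) = C v1"
        proof (rule Max_eqI)
          show "finite (C ` (S \<inter> V))" using SVfin by simp
          show "C v1 \<in> C ` (S \<inter> V)" using v1(1) by auto
          fix y assume "y \<in> C ` (S \<inter> V)"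
          then obtain v where v: "v \<in> S \<inter> V" "y = C v" by auto
          show "y \<le> C v1"
          proof (cases "v \<in> X")
            case True then show ?thesis using v cv1 Cv1 by (simp add: C_def)
          next
            case False then show ?thesis using v gev[of v] Cv1 by (simp add: C_def)
          qed
        qed
        show ?thesis
        proof (rule ex1I[of _ v1])
          show "v1 \<in> S \<inter> V \<and> C v1 = Max (C ` (S \<inter> V))" using v1(1) M by auto
          fix v assume v: "v \<in> S \<inter> V \<and> C v = Max (C ` (S \<inter> V))"
          show "v = v1"
          proof (cases "v \<in> X")
            case True then show ?thesis using v M Cv1 cv1 by (simp add: C_def)
          next
            case False
            then have "v \<in> S \<inter> (V - X)" using v by auto
            moreover have "C' v = Max (C' ` (S \<inter> (V - X)))" using v M Cv1 v1(2) False
              by (simp add: C_def)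
            ultimately show ?thesis using v1(3) by blast
          qed
        qed
      next
        case True
        then have sub: "S \<inter> V \<subseteq> X" by auto
        have eq: "S \<inter> U = S \<inter> V" using sub XU UV by auto
        have edge: "S \<inter> U \<in> induced_edges E U" using S(1) by (auto simp: induced_edges_def)
        have "\<not> card (S \<inter> V) \<ge> 2"
        proof
          assume "card (S \<inter> V) \<ge> 2"
          then obtain u w where "u \<in> S \<inter> U" "w \<in> S \<inter> U" "D u \<noteq> D w"
            using D(1) edge eq unfolding proper_coloring_def by metis
          then show False using sub eq by (auto simp: X_def cls_def)
        qed
        moreover have "card (S \<inter> V) \<ge> 1" using S(2) SVfin by (simp add: Suc_le_eq card_gt_0_iff)
        ultimately have "card (S \<inter> V) = 1" by simp
        then obtain x where x: "S \<inter> V = {x}" using card_1_singletonE by blast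
        show ?thesis using x by auto
      qed
    qed
    show ?thesis using inL um by blast
  qed
qed

theorem theorem2p4:
  fixes k :: nat and V :: "'a set" and E :: "'a set set" and L :: "'a \<Rightarrow> nat set"
  assumes "k \<ge> 2"
    and "hypergraph V E"
    and "hereditarily_k_colorable k V E"
    and "\<forall>v\<in>V. finite (L v) \<and> (\<forall>c\<in>L v. c > 0)"
    and "(\<Sum>v\<in>V. (real k / (real k - 1)) powr (- real (card (L v)))) < 1"
  shows "\<exists>C. unique_max_coloring V E C \<and> (\<forall>v\<in>V. C v \<in> L v)"
proof -
  have fin: "finite V" and ed: "\<forall>S\<in>E. S \<noteq> {} \<and> S \<subseteq> V"
    using assms(2) by (auto simp: hypergraph_def)
  obtain C where C: "\<forall>v\<in>V. C v \<in> L v"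
    "\<forall>S\<in>E. S \<inter> V \<noteq> {} \<longrightarrow> (\<exists>!v. v \<in> S \<inter> V \<and> C v = Max (C ` (S \<inter> V)))"
    using main_lemma[OF assms(1) fin, of E L] assms(3,4,5)
    by (auto simp: hereditarily_k_colorable_def)
  have "unique_max_coloring V E C"
    unfolding unique_max_coloring_def
  proof (intro conjI ballI)
    fix v assume "v \<in> V" then show "C v > 0" using C(1) assms(4) by auto
  next
    fix S assume S: "S \<in> E"
    then have "S \<inter> V = S" "S \<inter> V \<noteq> {}" using ed by auto
    then show "\<exists>!v. v \<in> S \<and> C v = Max (C ` S)" using C(2) S by metis
  qed
  then show ?thesis using C(1) by blast
qed

end
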